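(* Let $f:\mathbb R^n\to\mathbb R$ be continuously differentiable and let $\{x^k\}$ be generated by $x^{k+1}=x^k+t_kd^k$ with $t_k\ge0$. Suppose $\inf_k f(x^k)>-\infty$ and: (a) $f$ satisfies the $L$-descent condition for some $L>0$; (b) $\{d^k\}$ is gradient associated with $\{x^k\}$ and satisfies the sufficient descent condition $\langle\nabla f(x^k),d^k\rangle\le-\kappa\|d^k\|^2$ for all $k\in\mathbb N$, for some $\kappa>0$; (c) $\sum_{k=1}^\infty t_k=\infty$ and there are $\delta\in(0,2\kappa)$ and $N\in\mathbb N$ with $t_k\le \frac{2\kappa-\delta}{L}$ for all $k\ge N$. Then every accumulation point of $\{x^k\}$ is a stationary point of $f$; if $\{x^k\}$ is bounded then its set of accumulation points is nonempty, compact and connected; and if $\{x^k\}$ has an isolated accumulation point then $\{x^k\}$ converges to it. Moreover, if $\{t_k\}$ is bounded away from $0$, then $\nabla f(x^k)\to0$ as $k\to\infty$.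
   Context: $f$ satisfies the $L$-descent condition if $f(y)\le f(x)+\langle\nabla f(x),y-x\rangle+\frac L2\|y-x\|^2$ for all $x,y\in\mathbb R^n$. A direction sequence $\{d^k\}$ is called gradient associated with $\{x^k\}$ if for every infinite set $J\subset\mathbb N$, $d^k\to0$ along $J$ implies $\nabla f(x^k)\to 0$ along $J$. *)

theory Defs
  imports "HOL-Analysis.Analysis"
begin

definition L_descent :: "('a::euclidean_space \<Rightarrow> real) \<Rightarrow> ('a \<Rightarrow> 'a) \<Rightarrow> real \<Rightarrow> bool" where
  "L_descent f g L \<longleftrightarrow>
     (\<forall>x y. f y \<le> f x + g x \<bullet> (y - x) + L / 2 * (norm (y - x))\<^sup>2)"

definition gradient_associated :: "('a::euclidean_space \<Rightarrow> 'a) \<Rightarrow> (nat \<Rightarrow> 'a) \<Rightarrow> (nat \<Rightarrow> 'a) \<Rightarrow> bool" where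
  "gradient_associated g x d \<longleftrightarrow>
     (\<forall>J::nat set. infinite J \<longrightarrow>
        (d \<longlongrightarrow> 0) (inf sequentially (principal J)) \<longrightarrow>
        ((\<lambda>k. g (x k)) \<longlongrightarrow> 0) (inf sequentially (principal J)))"

definition acc_points :: "(nat \<Rightarrow> 'a::topological_space) \<Rightarrow> 'a set" where
  "acc_points x = {p. \<exists>r. strict_mono r \<and> (x \<circ> r) \<longlonglongrightarrow> p}"

end

theory Submission
  imports Defs
begin


lemma mk_subseq:
  assumes "\<And>n i. \<exists>j>i. Q n j"
  shows "\<exists>r::nat\<Rightarrow>nat. strict_mono r \<and> (\<forall>n. Q n (r n))"
proof -
  define s where "s n i = (SOME j. j > i \<and> Q n j)" for n i
  have s: "s n i > i \<and> Q n (s n i)" for n i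
    unfolding s_def by (rule someI_ex[where P="\<lambda>j. j > i \<and> Q n j"]) (rule assms)
  define r where "r = rec_nat (s 0 0) (\<lambda>n i. s (Suc n) i)"
  have r0: "r 0 = s 0 0" and rS: "r (Suc n) = s (Suc n) (r n)" for n by (simp_all add: r_def)
  have "strict_mono r" unfolding strict_mono_Suc_iff by (simp add: rS s)
  moreover have "Q n (r n)" for n by (cases n) (simp_all add: r0 rS s)
  ultimately show ?thesis by blast
qed

lemma freq_acc:
  fixes x :: "nat \<Rightarrow> 'a::metric_space"
  assumes "\<And>e n. e > 0 \<Longrightarrow> \<exists>k>n. dist (x k) p < e"
  shows "p \<in> acc_points x"
proof -
  have "\<exists>j>i. dist (x j) p < inverse (real (Suc n))" for n i
    using assms[of "inverse (real (Suc n))" i] by simp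
  from mk_subseq[of "\<lambda>n k. dist (x k) p < inverse (real (Suc n))", OF this]
  obtain r where r: "strict_mono r" "\<forall>n. dist (x (r n)) p < inverse (real (Suc n))"
    by blast
  have "(\<lambda>n. dist (x (r n)) p) \<longlonglongrightarrow> 0"
  proof (rule tendsto_sandwich[of "\<lambda>_. 0" _ _ "\<lambda>n. inverse (real (Suc n))"])
    show "\<forall>\<^sub>F n in sequentially. dist (x (r n)) p \<le> inverse (real (Suc n))"
      by (rule always_eventually) (intro allI less_imp_le r(2)[rule_format])
    show "\<forall>\<^sub>F n in sequentially. 0 \<le> dist (x (r n)) p"
      by (rule always_eventually) simp
    show "(\<lambda>n. 0::real) \<longlonglongrightarrow> 0" by (rule tendsto_const)
    show "(\<lambda>n. inverse (real (Suc n))) \<longlonglongrightarrow> 0" by (rule LIMSEQ_inverse_real_of_nat)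
  qed
  then have "(x \<circ> r) \<longlonglongrightarrow> p" by (subst tendsto_dist_iff) (simp add: o_def)
  then show ?thesis unfolding acc_points_def using r(1) by blast
qed

lemma acc_freq:
  fixes x :: "nat \<Rightarrow> 'a::metric_space"
  assumes "p \<in> acc_points x" "e > 0"
  shows "\<exists>k\<ge>n. dist (x k) p < e"
proof -
  obtain r where r: "strict_mono r" "(x \<circ> r) \<longlonglongrightarrow> p"
    using assms(1) unfolding acc_points_def by blast
  from r(2) assms(2) obtain no where no: "\<forall>j\<ge>no. dist ((x \<circ> r) j) p < e"
    unfolding lim_sequentially by blast
  let ?j = "max n no"
  have "dist (x (r ?j)) p < e" using no by simp
  moreover have "r ?j \<ge> n" using seq_suble[OF r(1), of ?j] by simp
  ultimately show ?thesis by blast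
qed

lemma compact_acc:
  fixes x :: "nat \<Rightarrow> 'a::metric_space"
  assumes K: "compact K" and fr: "\<And>M. \<exists>k\<ge>M. x k \<in> K"
  shows "\<exists>q\<in>K. q \<in> acc_points x"
proof -
  have "infinite {k. x k \<in> K}" unfolding infinite_nat_iff_unbounded_le using fr by simp
  from infinite_enumerate[OF this]
  obtain r :: "nat \<Rightarrow> nat" where r0: "strict_mono r" "\<forall>n. r n \<in> {k. x k \<in> K}" by blast
  then have r: "strict_mono r" "\<And>n. x (r n) \<in> K" by auto
  have "\<forall>n. (x \<circ> r) n \<in> K" using r(2) by simp
  then obtain l r' where l: "l \<in> K" "strict_mono r'" "((x \<circ> r) \<circ> r') \<longlonglongrightarrow> l"
    using K[unfolded compact_def, rule_format] by blast
  have "strict_mono (r \<circ> r')" using r(1) l(2) by (rule strict_mono_o)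
  moreover have "(x \<circ> (r \<circ> r')) \<longlonglongrightarrow> l" using l(3) by (simp add: o_assoc)
  ultimately have "l \<in> acc_points x" unfolding acc_points_def by blast
  then show ?thesis using l(1) by blast
qed

lemma acc_closed:
  fixes x :: "nat \<Rightarrow> 'a::metric_space"
  shows "closed (acc_points x)"
proof -
  have "p \<in> acc_points x" if H: "\<forall>e>0. \<exists>q\<in>acc_points x. dist q p < e" for p
  proof (rule freq_acc)
    fix e :: real and n assume e: "e > 0"
    have e2: "e/2 > 0" using e by simp
    then obtain q where q: "q \<in> acc_points x" "dist q p < e/2" using H by blast
    then obtain k where "k \<ge> Suc n" "dist (x k) q < e/2" using acc_freq[OF q(1), of "e/2" "Suc n"] e by auto
    then show "\<exists>k>n. dist (x k) p < e" using q dist_triangle[of "x k" p q]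
      by (intro exI[of _ k]) auto
  qed
  then have "closure (acc_points x) \<subseteq> acc_points x" by (auto simp: closure_approachable)
  then show ?thesis using closure_subset_eq by blast
qed

lemma acc_sub_closure:
  fixes x :: "nat \<Rightarrow> 'a::metric_space"
  shows "acc_points x \<subseteq> closure (range x)"
proof
  fix p assume p: "p \<in> acc_points x"
  show "p \<in> closure (range x)" unfolding closure_approachable
  proof (intro allI impI)
    fix e :: real assume "e > 0"
    then obtain k where "dist (x k) p < e" using acc_freq[OF p] by blast
    then show "\<exists>y\<in>range x. dist y p < e" by blast
  qed
qed



lemma acc_connected:
  fixes x :: "nat \<Rightarrow> 'a::euclidean_space"
  assumes bd: "bounded (range x)" and st: "(\<lambda>k. x (Suc k) - x k) \<longlonglongrightarrow> 0"
  shows "connected (acc_points x)"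
proof -
  let ?A = "acc_points x"
  have cA: "closed ?A" by (rule acc_closed)
  have "bounded ?A" by (rule bounded_subset[OF bounded_closure[OF bd] acc_sub_closure])
  then have compA: "compact ?A" using cA by (simp add: compact_eq_bounded_closed)
  show ?thesis
  proof (rule ccontr)
    assume "\<not> connected ?A"
    then obtain U V where UV: "closed U" "closed V" "U \<noteq> {}" "V \<noteq> {}" "U \<union> V = ?A" "U \<inter> V = {}"
      using connected_closed_set[OF cA] by blast
    have "U = ?A \<inter> U" using UV(5) by blast
    then have cU: "compact U" using compact_Int_closed[OF compA UV(1)] by simp
    obtain \<eta> where \<eta>: "\<eta> > 0" "\<forall>u\<in>U. \<forall>v\<in>V. \<eta> \<le> dist u v"
      using separate_compact_closed[OF cU UV(2) UV(6)] by blast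
    define NU where "NU k = (\<exists>u\<in>U. dist (x k) u < \<eta>/3)" for k
    define NV where "NV k = (\<exists>v\<in>V. dist (x k) v < \<eta>/3)" for k
    have "\<exists>M. \<forall>k\<ge>M. NU k \<or> NV k"
    proof (rule ccontr)
      assume "\<not> ?thesis"
      then have fr: "\<forall>M. \<exists>k\<ge>M. \<not> NU k \<and> \<not> NV k" by auto
      define K where "K = closure (range x) - (\<Union>u\<in>?A. ball u (\<eta>/3))"
      have cK: "compact K" unfolding K_def using bd by (intro compact_diff) auto
      moreover have fK: "\<exists>k\<ge>M. x k \<in> K" for M
      proof -
        obtain k where k: "k \<ge> M" "\<not> NU k" "\<not> NV k" using fr by blast
        have "x k \<notin> ball u (\<eta>/3)" if "u \<in> ?A" for u
          using that k UV(5) unfolding NU_def NV_def by (auto simp: dist_commute)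
        then have "x k \<notin> (\<Union>u\<in>?A. ball u (\<eta>/3))" by blast
        moreover have "x k \<in> closure (range x)" using closure_subset[of "range x"] by blast
        ultimately have "x k \<in> K" unfolding K_def by blast
        then show ?thesis using k(1) by blast
      qed
      obtain q where q: "q \<in> K" "q \<in> ?A" using compact_acc[OF cK fK] by blast
      have "q \<in> ball q (\<eta>/3)" using \<eta>(1) by simp
      then show False using q unfolding K_def by blast
    qed
    then obtain M1 where M1: "\<And>k. k \<ge> M1 \<Longrightarrow> NU k \<or> NV k" by blast
    have e3: "\<eta>/3 > 0" using \<eta>(1) by simp
    obtain M2 where M2': "\<forall>k\<ge>M2. dist (x (Suc k) - x k) 0 < \<eta>/3"
      using st[unfolded lim_sequentially, rule_format, OF e3] by blast
    have M2: "dist (x k) (x (Suc k)) < \<eta>/3" if "k \<ge> M2" for k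
      using M2'[rule_format, OF that] by (simp add: dist_norm norm_minus_commute)
    define M where "M = max M1 M2"
    have sep: "dist u v < \<eta>" if "dist (x k) u < \<eta>/3" "dist (x j) v < \<eta>/3" "dist (x k) (x j) < \<eta>/3" for u v k j
      using that dist_triangle[of u v "x k"] dist_triangle[of "x k" v "x j"] dist_commute[of u "x k"] by linarith
    have farUV: "\<not> dist u v < \<eta>" if "u \<in> U" "v \<in> V" for u v
      using \<eta>(2) that by (meson not_less)
    have both: "\<not> (NU k \<and> NV k)" for k
    proof
      assume "NU k \<and> NV k"
      then obtain u v where uv: "u \<in> U" "v \<in> V" "dist (x k) u < \<eta>/3" "dist (x k) v < \<eta>/3"
        unfolding NU_def NV_def by blast
      have "dist (x k) (x k) < \<eta>/3" using e3 by simp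
      then have "dist u v < \<eta>" using sep[OF uv(3) uv(4)] by blast
      then show False using farUV[OF uv(1,2)] by blast
    qed
    have tU: "NU (Suc k)" if h: "NU k" "k \<ge> M" for k
    proof (rule ccontr)
      assume "\<not> NU (Suc k)"
      then have "NV (Suc k)" using M1[of "Suc k"] h(2) unfolding M_def by auto
      then obtain u v where uv: "u \<in> U" "v \<in> V" "dist (x k) u < \<eta>/3" "dist (x (Suc k)) v < \<eta>/3"
        using h(1) unfolding NU_def NV_def by blast
      have "dist (x k) (x (Suc k)) < \<eta>/3" using M2 h(2) unfolding M_def by simp
      then have "dist u v < \<eta>" using sep[OF uv(3) uv(4)] by blast
      then show False using farUV[OF uv(1,2)] by blast
    qed
    have tV: "NV (Suc k)" if h: "NV k" "k \<ge> M" for k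
    proof (rule ccontr)
      assume "\<not> NV (Suc k)"
      then have "NU (Suc k)" using M1[of "Suc k"] h(2) unfolding M_def by auto
      then obtain u v where uv: "u \<in> U" "v \<in> V" "dist (x k) v < \<eta>/3" "dist (x (Suc k)) u < \<eta>/3"
        using h(1) unfolding NU_def NV_def by blast
      have "dist (x k) (x (Suc k)) < \<eta>/3" using M2 h(2) unfolding M_def by simp
      then have "dist v u < \<eta>" using sep[OF uv(3) uv(4)] by blast
      then show False using farUV[OF uv(1,2)] by (simp add: dist_commute)
    qed
    have "NU M \<or> NV M" using M1 unfolding M_def by auto
    then show False
    proof
      assume "NU M"
      have allU: "NU k" if "k \<ge> M" for k using that
      proof (induction k rule: dec_induct)
        case base then show ?case using \<open>NU M\<close> .
      next
        case (step n) then show ?case using tU by blast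
      qed
      obtain v where "v \<in> V" using UV(4) by blast
      then have "v \<in> ?A" using UV(5) by blast
      then obtain k where "k \<ge> M" "dist (x k) v < \<eta>/3" using acc_freq[of v x "\<eta>/3" M] \<eta>(1) by auto
      then have "NV k" using \<open>v \<in> V\<close> unfolding NV_def by blast
      then show False using both allU \<open>k \<ge> M\<close> by blast
    next
      assume "NV M"
      have allV: "NV k" if "k \<ge> M" for k using that
      proof (induction k rule: dec_induct)
        case base then show ?case using \<open>NV M\<close> .
      next
        case (step n) then show ?case using tV by blast
      qed
      obtain u where "u \<in> U" using UV(3) by blast
      then have "u \<in> ?A" using UV(5) by blast
      then obtain k where "k \<ge> M" "dist (x k) u < \<eta>/3" using acc_freq[of u x "\<eta>/3" M] \<eta>(1) by auto
      then have "NU k" using \<open>u \<in> U\<close> unfolding NU_def by blast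
      then show False using both allV \<open>k \<ge> M\<close> by blast
    qed
  qed
qed



lemma isolated_conv:
  fixes x :: "nat \<Rightarrow> 'a::euclidean_space"
  assumes st: "(\<lambda>k. x (Suc k) - x k) \<longlonglongrightarrow> 0" and p: "p \<in> acc_points x"
    and e: "e > 0" "ball p e \<inter> acc_points x = {p}"
  shows "x \<longlonglongrightarrow> p"
proof (rule ccontr)
  assume "\<not> x \<longlonglongrightarrow> p"
  then obtain \<eta>0 where \<eta>0: "\<eta>0 > 0" "\<forall>M. \<exists>k\<ge>M. dist (x k) p \<ge> \<eta>0"
    unfolding lim_sequentially by (meson not_le)
  define \<eta> where "\<eta> = min \<eta>0 (e/2)"
  have \<eta>: "\<eta> > 0" "\<eta> < e" "\<forall>M. \<exists>k\<ge>M. dist (x k) p \<ge> \<eta>"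
    using \<eta>0 e unfolding \<eta>_def by (auto, meson min.coboundedI1 order_trans)
  have "\<exists>M. \<forall>k\<ge>M. dist (x (Suc k) - x k) 0 < \<eta>/2"
    using st \<eta>(1) unfolding lim_sequentially by (meson \<eta>(1) half_gt_zero)
  then obtain M2 where M2: "\<And>k. k \<ge> M2 \<Longrightarrow> dist (x k) (x (Suc k)) < \<eta>/2"
    by (metis dist_norm dist_commute diff_zero)
  define K where "K = cball p \<eta> - ball p (\<eta>/2)"
  have "compact K" unfolding K_def by (intro compact_diff) auto
  moreover have "\<exists>k\<ge>M. x k \<in> K" for M
  proof -
    obtain j where j: "j \<ge> max M M2" "dist (x j) p < \<eta>/2"
      using acc_freq[OF p, of "\<eta>/2" "max M M2"] \<eta>(1) by auto
    show ?thesis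
    proof (rule ccontr)
      assume nk: "\<not> ?thesis"
      have "dist (x k) p < \<eta>/2" if "k \<ge> j" for k using that
      proof (induction k rule: dec_induct)
        case base then show ?case using j by simp
      next
        case (step n)
        have "dist (x (Suc n)) p \<le> dist (x (Suc n)) (x n) + dist (x n) p" by (rule dist_triangle)
        also have "\<dots> < \<eta>" using M2[of n] step j by (simp add: dist_commute)
        finally have "dist (x (Suc n)) p < \<eta>" .
        moreover have "x (Suc n) \<notin> K" using nk step j by auto
        ultimately show ?case unfolding K_def by (auto simp: dist_commute)
      qed
      moreover obtain l where "l \<ge> j" "dist (x l) p \<ge> \<eta>" using \<eta>(3) by blast
      ultimately show False using \<eta>(1) by fastforce
    qed
  qed
  ultimately obtain q where q: "q \<in> K" "q \<in> acc_points x" using compact_acc by blast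
  then have "q \<in> ball p e" using \<eta>(2) unfolding K_def by auto
  then have "q = p" using q e(2) by blast
  then show False using q(1) \<eta>(1) unfolding K_def by auto
qed



theorem mainTheorem3:
  fixes f :: "'a::euclidean_space \<Rightarrow> real" and g :: "'a \<Rightarrow> 'a"
    and x d :: "nat \<Rightarrow> 'a" and t :: "nat \<Rightarrow> real"
    and L \<kappa> \<delta> :: real and N :: nat
  assumes grad: "\<And>z. (f has_derivative (\<lambda>h. g z \<bullet> h)) (at z)"
    and grad_cont: "continuous_on UNIV g"
    and iter: "\<And>k. x (Suc k) = x k + t k *\<^sub>R d k"
    and t_nonneg: "\<And>k. t k \<ge> 0"
    and bdd: "bdd_below (range (\<lambda>k. f (x k)))"
    and L_pos: "L > 0" and descent: "L_descent f g L"
    and ga: "gradient_associated g x d"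
    and kappa_pos: "\<kappa> > 0"
    and suff_desc: "\<And>k. g (x k) \<bullet> d k \<le> - \<kappa> * (norm (d k))\<^sup>2"
    and t_div: "filterlim (\<lambda>n. \<Sum>k=1..n. t k) at_top sequentially"
    and delta: "0 < \<delta>" "\<delta> < 2 * \<kappa>"
    and t_bound: "\<And>k. k \<ge> N \<Longrightarrow> t k \<le> (2 * \<kappa> - \<delta>) / L"
  shows "(\<forall>p \<in> acc_points x. g p = 0)
    \<and> (bounded (range x) \<longrightarrow>
         acc_points x \<noteq> {} \<and> compact (acc_points x) \<and> connected (acc_points x))
    \<and> (\<forall>p \<in> acc_points x. (\<exists>e>0. ball p e \<inter> acc_points x = {p}) \<longrightarrow> x \<longlonglongrightarrow> p)
    \<and> ((\<exists>\<epsilon>>0. \<forall>k. t k \<ge> \<epsilon>) \<longrightarrow> (\<lambda>k. g (x k)) \<longlonglongrightarrow> 0)"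
proof -
  define a where "a k = t k * (norm (d k))\<^sup>2" for k
  have a_nn: "a k \<ge> 0" for k unfolding a_def using t_nonneg[of k] by simp
  define C where "C = (2 * \<kappa> - \<delta>) / L"
  have C_pos: "C > 0" unfolding C_def using delta L_pos by simp
  have Lt: "L * t k \<le> 2 * \<kappa> - \<delta>" if "k \<ge> N" for k
    using t_bound[OF that] L_pos by (simp add: pos_le_divide_eq mult.commute)
  have desc: "f (x (Suc k)) \<le> f (x k) - \<delta>/2 * a k" if kN: "k \<ge> N" for k
  proof -
    define tk where "tk = t k"
    define nd where "nd = (norm (d k))\<^sup>2"
    have tk0: "tk \<ge> 0" unfolding tk_def by (rule t_nonneg)
    have nd0: "nd \<ge> 0" unfolding nd_def by simp
    have y: "x (Suc k) - x k = tk *\<^sub>R d k" using iter[of k] unfolding tk_def by simp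
    have "f (x (Suc k)) \<le> f (x k) + g (x k) \<bullet> (x (Suc k) - x k) + L / 2 * (norm (x (Suc k) - x k))\<^sup>2"
      using descent unfolding L_descent_def by blast
    also have "g (x k) \<bullet> (x (Suc k) - x k) = tk * (g (x k) \<bullet> d k)" using y by simp
    also have "(norm (x (Suc k) - x k))\<^sup>2 = tk\<^sup>2 * nd" using y tk0 unfolding nd_def
      by (simp add: power_mult_distrib)
    finally have f1: "f (x (Suc k)) \<le> f (x k) + tk * (g (x k) \<bullet> d k) + L / 2 * (tk\<^sup>2 * nd)" .
    have h1: "tk * (g (x k) \<bullet> d k) \<le> tk * (- \<kappa> * nd)"
      using mult_left_mono[OF suff_desc[of k] tk0] unfolding nd_def by simp
    have "L * tk * (tk * nd) \<le> (2 * \<kappa> - \<delta>) * (tk * nd)"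
      using mult_right_mono[OF Lt[OF kN] mult_nonneg_nonneg[OF tk0 nd0]] unfolding tk_def by simp
    then have h2: "L / 2 * (tk\<^sup>2 * nd) \<le> (2 * \<kappa> - \<delta>) / 2 * (tk * nd)"
      by (simp add: power2_eq_square algebra_simps)
    have "a k = tk * nd" unfolding a_def tk_def nd_def by simp
    then show ?thesis using f1 h1 h2 by (simp add: algebra_simps)
  qed
  obtain B where B: "\<And>k. B \<le> f (x k)" using bdd unfolding bdd_below_def by blast
  have psum: "(\<Sum>i<n. a (i + N)) \<le> 2 / \<delta> * (f (x N) - f (x (n + N)))" for n
  proof (induction n)
    case 0 then show ?case by simp
  next
    case (Suc n)
    have "\<delta> / 2 * a (n + N) \<le> f (x (n + N)) - f (x (Suc (n + N)))"
      using desc[of "n + N"] by simp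
    then have "a (n + N) \<le> 2 / \<delta> * (f (x (n + N)) - f (x (Suc (n + N))))"
      using delta(1) by (simp add: field_simps)
    then show ?case using Suc by (simp add: algebra_simps)
  qed
  have "summable (\<lambda>i. a (i + N))"
  proof (rule summableI_nonneg_bounded)
    show "0 \<le> a (n + N)" for n by (rule a_nn)
    show "(\<Sum>i<n. a (i + N)) \<le> 2 / \<delta> * (f (x N) - B)" for n
    proof -
      have "2 / \<delta> * (f (x N) - f (x (n + N))) \<le> 2 / \<delta> * (f (x N) - B)"
        using B[of "n + N"] delta(1) by (intro mult_left_mono) auto
      then show ?thesis using psum[of n] by linarith
    qed
  qed
  then have sa: "summable a" by (rule summable_iff_shift[THEN iffD1])
  have a0: "a \<longlonglongrightarrow> 0" by (rule summable_LIMSEQ_zero[OF sa])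
  have st: "(\<lambda>k. x (Suc k) - x k) \<longlonglongrightarrow> 0"
  proof -
    have b: "(norm (x (Suc k) - x k))\<^sup>2 \<le> C * a k" if "k \<ge> N" for k
    proof -
      have "(norm (x (Suc k) - x k))\<^sup>2 = t k * (t k * (norm (d k))\<^sup>2)"
        using iter[of k] t_nonneg[of k] by (simp add: power_mult_distrib power2_eq_square)
      also have "\<dots> \<le> C * (t k * (norm (d k))\<^sup>2)"
        using t_bound[OF that] t_nonneg[of k] unfolding C_def by (intro mult_right_mono) auto
      finally show ?thesis unfolding a_def .
    qed
    have "(\<lambda>k. (norm (x (Suc k) - x k))\<^sup>2) \<longlonglongrightarrow> 0"
    proof (rule tendsto_sandwich[of "\<lambda>_. 0" _ _ "\<lambda>k. C * a k"])
      show "\<forall>\<^sub>F k in sequentially. 0 \<le> (norm (x (Suc k) - x k))\<^sup>2" by simp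
      show "\<forall>\<^sub>F k in sequentially. (norm (x (Suc k) - x k))\<^sup>2 \<le> C * a k"
        unfolding eventually_sequentially using b by blast
      show "(\<lambda>k. 0::real) \<longlonglongrightarrow> 0" by (rule tendsto_const)
      show "(\<lambda>k. C * a k) \<longlonglongrightarrow> 0" using tendsto_mult_right_zero[OF a0] by simp
    qed
    then have "(\<lambda>k. sqrt ((norm (x (Suc k) - x k))\<^sup>2)) \<longlonglongrightarrow> sqrt 0" by (rule tendsto_real_sqrt)
    then have "(\<lambda>k. norm (x (Suc k) - x k)) \<longlonglongrightarrow> 0" by simp
    then show ?thesis by (rule tendsto_norm_zero_iff[THEN iffD1])
  qed
  have P1: "g p = 0" if p: "p \<in> acc_points x" for p
  proof (rule ccontr)
    assume gp: "g p \<noteq> 0"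
    define \<gamma> where "\<gamma> = norm (g p) / 2"
    have \<gamma>: "\<gamma> > 0" unfolding \<gamma>_def using gp by simp
    have "isCont g p" using grad_cont by (simp add: continuous_on_eq_continuous_at)
    then obtain \<epsilon> where \<epsilon>: "\<epsilon> > 0" "\<And>y. dist y p < \<epsilon> \<Longrightarrow> dist (g y) (g p) < \<gamma>"
      unfolding continuous_at_eps_delta using \<gamma> by blast
    have gy: "norm (g y) > \<gamma>" if "dist y p < \<epsilon>" for y
    proof -
      have "norm (g p) \<le> norm (g y) + norm (g p - g y)" by (rule norm_triangle_sub)
      also have "norm (g p - g y) = dist (g y) (g p)" by (simp add: dist_norm norm_minus_commute)
      finally show ?thesis using \<epsilon>(2)[OF that] unfolding \<gamma>_def by simp
    qed
    have "\<exists>c>0. \<exists>K. \<forall>k\<ge>K. dist (x k) p < \<epsilon> \<longrightarrow> norm (d k) \<ge> c"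
    proof (rule ccontr)
      assume nc: "\<not> ?thesis"
      have H: "\<exists>j>i. dist (x j) p < \<epsilon> \<and> norm (d j) < inverse (real (Suc n))" for n i
      proof -
        have "inverse (real (Suc n)) > 0" by simp
        then obtain k where "k \<ge> Suc i" "dist (x k) p < \<epsilon>" "\<not> norm (d k) \<ge> inverse (real (Suc n))"
          using nc by blast
        then show ?thesis by (intro exI[of _ k]) auto
      qed
      from mk_subseq[of "\<lambda>n j. dist (x j) p < \<epsilon> \<and> norm (d j) < inverse (real (Suc n))", OF H]
      obtain r :: "nat \<Rightarrow> nat" where r: "strict_mono r"
        "\<forall>n. dist (x (r n)) p < \<epsilon> \<and> norm (d (r n)) < inverse (real (Suc n))" by blast
      define F where "F = inf sequentially (principal (range r))"
      have infJ: "infinite (range r)"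
        by (rule range_inj_infinite) (rule strict_mono_imp_inj_on[OF r(1)])
      have "(d \<longlongrightarrow> 0) F"
        unfolding tendsto_iff F_def eventually_inf_principal eventually_sequentially
      proof (intro allI impI)
        fix e :: real assume e: "e > 0"
        obtain M0 where M0: "inverse (real (Suc M0)) < e" using reals_Archimedean[OF e] by blast
        have "dist (d k) 0 < e" if hk: "k \<ge> r M0" "k \<in> range r" for k
        proof -
          obtain n where n: "k = r n" using hk(2) by blast
          have "M0 \<le> n" using hk(1) n strict_mono_less_eq[OF r(1)] by simp
          then have "inverse (real (Suc n)) \<le> inverse (real (Suc M0))"
            by (intro le_imp_inverse_le) auto
          moreover have "norm (d (r n)) < inverse (real (Suc n))" using r(2) by blast
          ultimately have "norm (d (r n)) < e" using M0 by linarith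
          then show ?thesis using n by (simp add: dist_norm)
        qed
        then show "\<exists>M. \<forall>k\<ge>M. k \<in> range r \<longrightarrow> dist (d k) 0 < e" by blast
      qed
      then have dF: "(d \<longlongrightarrow> 0) (inf sequentially (principal (range r)))" unfolding F_def .
      have gF: "((\<lambda>k. g (x k)) \<longlongrightarrow> 0) F"
        unfolding F_def by (rule ga[unfolded gradient_associated_def, rule_format, OF infJ dF])
      have "\<forall>\<^sub>F k in F. dist (g (x k)) 0 < \<gamma>" using gF[unfolded tendsto_iff, rule_format, OF \<gamma>] .
      then have "\<exists>M. \<forall>k\<ge>M. k \<in> range r \<longrightarrow> dist (g (x k)) 0 < \<gamma>"
        unfolding F_def eventually_inf_principal eventually_sequentially .
      then obtain M where M: "\<forall>k\<ge>M. k \<in> range r \<longrightarrow> dist (g (x k)) 0 < \<gamma>" by blast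
      have "r M \<ge> M" by (rule seq_suble[OF r(1)])
      then have "dist (g (x (r M))) 0 < \<gamma>" using M by blast
      moreover have "norm (g (x (r M))) > \<gamma>" using gy[OF conjunct1[OF r(2)[rule_format]]] .
      ultimately show False by simp
    qed
    then obtain c K where c: "c > 0" and cK: "\<And>k. k \<ge> K \<Longrightarrow> dist (x k) p < \<epsilon> \<Longrightarrow> norm (d k) \<ge> c"
      by blast
    have ce: "c * \<epsilon> / 2 > 0" using c \<epsilon> by simp
    obtain m0 where m0: "\<forall>n\<ge>m0. norm (\<Sum>i. a (i + n)) < c * \<epsilon> / 2"
      using suminf_exist_split[OF ce sa] by blast
    have e2: "\<epsilon> / 2 > 0" using \<epsilon> by simp
    obtain m where m: "m \<ge> max K m0" "dist (x m) p < \<epsilon> / 2" using acc_freq[OF p e2] by blast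
    define b where "b i = a (i + m)" for i
    have sb: "summable b" unfolding b_def using sa by (rule summable_iff_shift[THEN iffD2])
    have b_nn: "b i \<ge> 0" for i unfolding b_def by (rule a_nn)
    have "norm (\<Sum>i. b i) < c * \<epsilon> / 2" using m0 m(1) unfolding b_def by simp
    then have tail: "(\<Sum>i. b i) < c * \<epsilon> / 2" using suminf_nonneg[OF sb b_nn] by simp
    have inv: "dist (x (m + n)) p < \<epsilon> \<and> c * norm (x (m + n) - x m) \<le> (\<Sum>i<n. b i)" for n
    proof (induction n)
      case 0 then show ?case using m(2) \<epsilon> by simp
    next
      case (Suc n)
      have dc: "norm (d (m + n)) \<ge> c" using cK[of "m + n"] Suc.IH m(1) by simp
      have xs: "x (m + Suc n) - x m = (x (m + n) - x m) + t (m + n) *\<^sub>R d (m + n)"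
        using iter[of "m + n"] by simp
      have "norm (x (m + Suc n) - x m) \<le> norm (x (m + n) - x m) + t (m + n) * norm (d (m + n))"
        unfolding xs using norm_triangle_ineq t_nonneg[of "m + n"] by (metis abs_of_nonneg norm_scaleR)
      then have "c * norm (x (m + Suc n) - x m) \<le> c * norm (x (m + n) - x m) + c * (t (m + n) * norm (d (m + n)))"
        using c by (simp add: distrib_left[symmetric] mult_left_mono)
      moreover have "c * (t (m + n) * norm (d (m + n))) \<le> b n"
      proof -
        have "c * (t (m + n) * norm (d (m + n))) \<le> norm (d (m + n)) * (t (m + n) * norm (d (m + n)))"
          using dc t_nonneg[of "m + n"] by (intro mult_right_mono) auto
        also have "\<dots> = b n" unfolding b_def a_def by (simp add: power2_eq_square add.commute)
        finally show ?thesis .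
      qed
      ultimately have cs: "c * norm (x (m + Suc n) - x m) \<le> (\<Sum>i<Suc n. b i)" using Suc.IH by simp
      have "(\<Sum>i<Suc n. b i) \<le> (\<Sum>i. b i)" using sum_le_suminf[OF sb, of "{..<Suc n}"] b_nn by simp
      then have "c * norm (x (m + Suc n) - x m) < c * (\<epsilon> / 2)" using cs tail by simp
      then have "norm (x (m + Suc n) - x m) < \<epsilon> / 2" using c by simp
      then have "dist (x (m + Suc n)) p < \<epsilon>"
        using dist_triangle[of "x (m + Suc n)" p "x m"] m(2) by (simp add: dist_norm)
      then show ?case using cs by simp
    qed
    have tb: "norm (t (i + m)) \<le> b i / c\<^sup>2" for i
    proof -
      have "dist (x (m + i)) p < \<epsilon>" using inv by blast
      then have dc: "norm (d (i + m)) \<ge> c" using cK[of "i + m"] m(1) by (simp add: add.commute)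
      have "c\<^sup>2 \<le> (norm (d (i + m)))\<^sup>2" using dc c by (intro power_mono) auto
      then have "t (i + m) * c\<^sup>2 \<le> t (i + m) * (norm (d (i + m)))\<^sup>2"
        using t_nonneg[of "i + m"] by (rule mult_left_mono)
      then have "c\<^sup>2 * t (i + m) \<le> b i" unfolding b_def a_def by (simp add: mult.commute)
      then show ?thesis using c t_nonneg[of "i + m"] by (simp add: field_simps)
    qed
    have "summable (\<lambda>i. b i / c\<^sup>2)" using sb by (rule summable_divide)
    have "\<exists>N. \<forall>n\<ge>N. norm (t (n + m)) \<le> b n / c\<^sup>2" using tb by blast
    then have "summable (\<lambda>i. t (i + m))"
      by (rule summable_comparison_test[of "\<lambda>i. t (i + m)" "\<lambda>i. b i / c\<^sup>2"]) fact
    then have st': "summable t" by (rule summable_iff_shift[THEN iffD1])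
    have "\<forall>\<^sub>F n in sequentially. suminf t + 1 \<le> (\<Sum>k=1..n. t k)"
      using t_div[unfolded filterlim_at_top, rule_format, of "suminf t + 1"] .
    then obtain N1 where N1: "\<forall>n\<ge>N1. suminf t + 1 \<le> (\<Sum>k=1..n. t k)" unfolding eventually_sequentially ..
    define n where "n = N1"
    have n: "suminf t + 1 \<le> (\<Sum>k=1..n. t k)" using N1 unfolding n_def by blast
    have "(\<Sum>k=1..n. t k) \<le> (\<Sum>k<Suc n. t k)"
      using t_nonneg by (intro sum_mono2) auto
    also have "\<dots> \<le> suminf t" using sum_le_suminf[OF st', of "{..<Suc n}"] t_nonneg by simp
    finally show False using n by simp
  qed
  have P2: "acc_points x \<noteq> {} \<and> compact (acc_points x) \<and> connected (acc_points x)"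
    if bd: "bounded (range x)"
  proof (intro conjI)
    have cK: "compact (closure (range x))" using bd by (simp add: compact_closure)
    have "\<exists>k\<ge>M. x k \<in> closure (range x)" for M using closure_subset[of "range x"] by blast
    then obtain q where "q \<in> acc_points x" using compact_acc[OF cK] by blast
    then show "acc_points x \<noteq> {}" by blast
    have "bounded (acc_points x)" by (rule bounded_subset[OF bounded_closure[OF bd] acc_sub_closure])
    then show "compact (acc_points x)" using acc_closed by (simp add: compact_eq_bounded_closed)
    show "connected (acc_points x)" by (rule acc_connected[OF bd st])
  qed
  have P3: "x \<longlonglongrightarrow> p" if p: "p \<in> acc_points x" and ex: "\<exists>e>0. ball p e \<inter> acc_points x = {p}" for p
  proof -
    obtain e where "e > 0" "ball p e \<inter> acc_points x = {p}" using ex by blast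
    then show ?thesis using isolated_conv[OF st p] by blast
  qed
  have P4: "(\<lambda>k. g (x k)) \<longlonglongrightarrow> 0" if ex: "\<exists>\<epsilon>>0. \<forall>k. t k \<ge> \<epsilon>"
  proof -
    obtain \<epsilon> where \<epsilon>: "\<epsilon> > 0" "\<And>k. t k \<ge> \<epsilon>" using ex by blast
    have b: "(norm (d k))\<^sup>2 \<le> a k / \<epsilon>" for k
    proof -
      have "\<epsilon> * (norm (d k))\<^sup>2 \<le> t k * (norm (d k))\<^sup>2" using \<epsilon>(2)[of k] by (intro mult_right_mono) auto
      then show ?thesis using \<epsilon>(1) unfolding a_def by (simp add: field_simps)
    qed
    have "(\<lambda>k. (norm (d k))\<^sup>2) \<longlonglongrightarrow> 0"
    proof (rule tendsto_sandwich[of "\<lambda>_. 0" _ _ "\<lambda>k. a k / \<epsilon>"])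
      show "\<forall>\<^sub>F k in sequentially. 0 \<le> (norm (d k))\<^sup>2" by simp
      show "\<forall>\<^sub>F k in sequentially. (norm (d k))\<^sup>2 \<le> a k / \<epsilon>" using b by simp
      show "(\<lambda>k. 0::real) \<longlonglongrightarrow> 0" by (rule tendsto_const)
      show "(\<lambda>k. a k / \<epsilon>) \<longlonglongrightarrow> 0" using tendsto_divide_zero[OF a0] by simp
    qed
    then have "(\<lambda>k. sqrt ((norm (d k))\<^sup>2)) \<longlonglongrightarrow> sqrt 0" by (rule tendsto_real_sqrt)
    then have "(\<lambda>k. norm (d k)) \<longlonglongrightarrow> 0" by simp
    then have "d \<longlonglongrightarrow> 0" by (rule tendsto_norm_zero_iff[THEN iffD1])
    then have "(d \<longlongrightarrow> 0) (inf sequentially (principal UNIV))" by simp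
    then have "((\<lambda>k. g (x k)) \<longlongrightarrow> 0) (inf sequentially (principal UNIV))"
      using ga unfolding gradient_associated_def by blast
    then show ?thesis by simp
  qed
  show ?thesis using P1 P2 P3 P4 by blast
qed


end
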